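(* Let $(\mu,b)$ be a stable configuration under perfect observability for the objective game $G$, with aggregate outcome $\varphi_{\mu,b}$. Then for each $i\in N$, every $\bar\theta_i\in\operatorname{supp}\mu_i$ and every $\theta\in\operatorname{supp}\mu$, $$\Pi_{\bar\theta_i}(\mu;b)=\pi_i(b(\theta))=\pi_i(\varphi_{\mu,b}).$$
   Context: Objective game: $G=(N,A,\pi)$ is a finite $n$-player normal-form game, $N=\{1,\dots,n\}$, finite action sets $A_i$, $A=\prod_{i\in N}A_i$, material payoff (fitness) functions $\pi_i:A\to\mathbb{R}$, extended multilinearly to mixed profiles in $\prod_{i}\Delta(A_i)$ and linearly to correlated strategies: $\pi_i(\varphi)=\sum_{a\in A}\varphi(a)\pi_i(a)$ for $\varphi\in\Delta(A)$; $\pi=(\pi_1,\dots,\pi_n)$. Preference types: $\Theta=\mathbb{R}^A$ (utility functions on $A$, extended multilinearly to mixed profiles). $\mathcal{M}(\Theta^n)$ is the set of product distributions $\mu=\mu_1\times\dots\times\mu_n$ on $\Theta^n$ with each $\mu_i$ finitely supported; $\operatorname{supp}\mu=\prod_i\operatorname{supp}\mu_i$, $\mu(\theta)=\prod_i\mu_i(\theta_i)$, $\mu_{-i}(\theta_{-i})=\prod_{j\neq i}\mu_j(\theta_j)$. Mutants: for nonempty $J\subseteq N$, a mutant sub-profile is $\tilde\theta_J\in\prod_{j\in J}(\Theta\setminus\operatorname{supp}\mu_j)$ with shares $\varepsilon=(\varepsilon_j)_{j\in J}\in(0,1)^{|J|}$, $\|\varepsilon\|=\max_j\varepsilon_j$;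 the post-entry distribution $\tilde\mu^\varepsilon$ has $\tilde\mu^\varepsilon_i=(1-\varepsilon_i)\mu_i+\varepsilon_i\delta_{\tilde\theta_i}$ for $i\in J$ and $\tilde\mu^\varepsilon_i=\mu_i$ otherwise. Perfect observability: for $\mu\in\mathcal M(\Theta^n)$, an equilibrium is a map $b:\operatorname{supp}\mu\to\prod_i\Delta(A_i)$ such that for each $\theta$, $b(\theta)$ is a Nash equilibrium of the normal-form game with action sets $A_i$ and payoffs $\theta_1,\dots,\theta_n$; $B_1(\mu)$ is the set of these; $(\mu,b)$ with $b\in B_1(\mu)$ is a configuration. Its aggregate outcome is $\varphi_{\mu,b}\in\Delta(A)$, $\varphi_{\mu,b}(a)=\sum_{\theta\in\operatorname{supp}\mu}\mu(\theta)\prod_{i}b_i(\theta)(a_i)$. Average fitness of $\theta_i\in\operatorname{supp}\mu_i$: $\Pi_{\theta_i}(\mu;b)=\sum_{\theta'_{-i}\in\operatorname{supp}\mu_{-i}}\mu_{-i}(\theta'_{-i})\pi_i(b(\theta_i,\theta'_{-i}))$. $(\mu,b)$ is balanced if for each $i$ all types in $\operatorname{supp}\mu_i$ have equal average fitness. Focal set: $B_1(\tilde\mu^\varepsilon;b)=\{\tilde b\in B_1(\tilde\mu^\varepsilon):\tilde b(\theta)=b(\theta)\ \forall\theta\in\operatorname{supp}\mu\}$. $(\mu,b)$ is stable if it is balanced and for every nonempty $J\subseteq N$ and every mutant sub-profile $\tilde\theta_J$ there is $\bar\epsilon\in(0,1)$ such that for every $\varepsilon\in(0,1)^{|J|}$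 with $\|\varepsilon\|<\bar\epsilon$ and every $\tilde b\in B_1(\tilde\mu^\varepsilon;b)$, either (i) there is $j\in J$ with $\Pi_{\theta_j}(\tilde\mu^\varepsilon;\tilde b)>\Pi_{\tilde\theta_j}(\tilde\mu^\varepsilon;\tilde b)$ for all $\theta_j\in\operatorname{supp}\mu_j$, or (ii) for every $i\in N$ all types in $\operatorname{supp}\tilde\mu^\varepsilon_i$ have equal average fitness under $(\tilde\mu^\varepsilon,\tilde b)$. *)

theory Defs
  imports Complex_Main "HOL-Library.FuncSet"
begin

text \<open>Players form a finite type 'i (N = UNIV). Preference types are
  utility functions on A, represented as functions on all of 'i => 'a that
  vanish outside A (so that Theta corresponds exactly to R^A).\<close>

type_synonym ('i,'a) utility = "('i \<Rightarrow> 'a) \<Rightarrow> real"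

definition profiles :: "('i \<Rightarrow> 'a set) \<Rightarrow> ('i \<Rightarrow> 'a) set" where
  "profiles As = PiE UNIV As"

definition finite_game :: "('i::finite \<Rightarrow> 'a set) \<Rightarrow> bool" where
  "finite_game As \<longleftrightarrow> (\<forall>i. finite (As i) \<and> As i \<noteq> {})"

definition Theta :: "('i \<Rightarrow> 'a set) \<Rightarrow> ('i,'a) utility set" where
  "Theta As = {u. \<forall>a. a \<notin> profiles As \<longrightarrow> u a = 0}"

definition mixed :: "'a set \<Rightarrow> ('a \<Rightarrow> real) \<Rightarrow> bool" where
  "mixed S s \<longleftrightarrow> (\<forall>x. 0 \<le> s x) \<and> (\<forall>x. x \<notin> S \<longrightarrow> s x = 0) \<and> (\<Sum>x\<in>S. s x) = 1"

definition mixed_profile :: "('i \<Rightarrow> 'a set) \<Rightarrow> ('i \<Rightarrow> 'a \<Rightarrow> real) \<Rightarrow> bool" where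
  "mixed_profile As \<sigma> \<longleftrightarrow> (\<forall>i. mixed (As i) (\<sigma> i))"

definition exp_pay :: "('i::finite \<Rightarrow> 'a set) \<Rightarrow> ('i,'a) utility \<Rightarrow> ('i \<Rightarrow> 'a \<Rightarrow> real) \<Rightarrow> real" where
  "exp_pay As u \<sigma> = (\<Sum>a\<in>profiles As. (\<Prod>j\<in>UNIV. \<sigma> j (a j)) * u a)"

definition corr_pay :: "('i::finite \<Rightarrow> 'a set) \<Rightarrow> ('i,'a) utility \<Rightarrow> (('i \<Rightarrow> 'a) \<Rightarrow> real) \<Rightarrow> real" where
  "corr_pay As u \<phi> = (\<Sum>a\<in>profiles As. \<phi> a * u a)"

definition nash :: "('i::finite \<Rightarrow> 'a set) \<Rightarrow> ('i \<Rightarrow> ('i,'a) utility) \<Rightarrow> ('i \<Rightarrow> 'a \<Rightarrow> real) \<Rightarrow> bool" where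
  "nash As \<theta> \<sigma> \<longleftrightarrow> mixed_profile As \<sigma> \<and>
     (\<forall>i \<tau>. mixed (As i) \<tau> \<longrightarrow> exp_pay As (\<theta> i) (\<sigma>(i := \<tau>)) \<le> exp_pay As (\<theta> i) \<sigma>)"

definition supp :: "(('i,'a) utility \<Rightarrow> real) \<Rightarrow> ('i,'a) utility set" where
  "supp m = {t. m t \<noteq> 0}"

definition distr :: "('i \<Rightarrow> 'a set) \<Rightarrow> (('i,'a) utility \<Rightarrow> real) \<Rightarrow> bool" where
  "distr As m \<longleftrightarrow> (\<forall>t. 0 \<le> m t) \<and> finite (supp m) \<and> supp m \<subseteq> Theta As \<and> (\<Sum>t\<in>supp m. m t) = 1"

definition pop_distr :: "('i \<Rightarrow> 'a set) \<Rightarrow> ('i \<Rightarrow> ('i,'a) utility \<Rightarrow> real) \<Rightarrow> bool" where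
  "pop_distr As \<mu> \<longleftrightarrow> (\<forall>i. distr As (\<mu> i))"

definition supp_prof :: "('i \<Rightarrow> ('i,'a) utility \<Rightarrow> real) \<Rightarrow> ('i \<Rightarrow> ('i,'a) utility) set" where
  "supp_prof \<mu> = PiE UNIV (\<lambda>i. supp (\<mu> i))"

definition B1 :: "('i::finite \<Rightarrow> 'a set) \<Rightarrow> ('i \<Rightarrow> ('i,'a) utility \<Rightarrow> real)
     \<Rightarrow> (('i \<Rightarrow> ('i,'a) utility) \<Rightarrow> ('i \<Rightarrow> 'a \<Rightarrow> real)) set" where
  "B1 As \<mu> = {b. \<forall>\<theta>\<in>supp_prof \<mu>. nash As \<theta> (b \<theta>)}"

definition avg_fit :: "('i::finite \<Rightarrow> 'a set) \<Rightarrow> ('i \<Rightarrow> ('i,'a) utility) \<Rightarrow>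
     ('i \<Rightarrow> ('i,'a) utility \<Rightarrow> real) \<Rightarrow> (('i \<Rightarrow> ('i,'a) utility) \<Rightarrow> ('i \<Rightarrow> 'a \<Rightarrow> real))
     \<Rightarrow> 'i \<Rightarrow> ('i,'a) utility \<Rightarrow> real" where
  "avg_fit As \<pi> \<mu> b i t =
     (\<Sum>\<theta>'\<in>{\<theta>'\<in>supp_prof \<mu>. \<theta>' i = t}. (\<Prod>j\<in>UNIV-{i}. \<mu> j (\<theta>' j)) * exp_pay As (\<pi> i) (b \<theta>'))"

definition aggregate :: "('i::finite \<Rightarrow> ('i,'a) utility \<Rightarrow> real) \<Rightarrow>
     (('i \<Rightarrow> ('i,'a) utility) \<Rightarrow> ('i \<Rightarrow> 'a \<Rightarrow> real)) \<Rightarrow> ('i \<Rightarrow> 'a) \<Rightarrow> real" where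
  "aggregate \<mu> b a = (\<Sum>\<theta>\<in>supp_prof \<mu>. (\<Prod>j\<in>UNIV. \<mu> j (\<theta> j)) * (\<Prod>j\<in>UNIV. b \<theta> j (a j)))"

definition balanced :: "('i::finite \<Rightarrow> 'a set) \<Rightarrow> ('i \<Rightarrow> ('i,'a) utility) \<Rightarrow>
     ('i \<Rightarrow> ('i,'a) utility \<Rightarrow> real) \<Rightarrow> (('i \<Rightarrow> ('i,'a) utility) \<Rightarrow> ('i \<Rightarrow> 'a \<Rightarrow> real)) \<Rightarrow> bool" where
  "balanced As \<pi> \<mu> b \<longleftrightarrow>
     (\<forall>i. \<forall>t\<in>supp (\<mu> i). \<forall>t'\<in>supp (\<mu> i). avg_fit As \<pi> \<mu> b i t = avg_fit As \<pi> \<mu> b i t')"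

definition post_entry :: "('i \<Rightarrow> ('i,'a) utility \<Rightarrow> real) \<Rightarrow> 'i set \<Rightarrow> ('i \<Rightarrow> ('i,'a) utility)
     \<Rightarrow> ('i \<Rightarrow> real) \<Rightarrow> ('i \<Rightarrow> ('i,'a) utility \<Rightarrow> real)" where
  "post_entry \<mu> J \<theta>t \<epsilon> = (\<lambda>i t. if i \<in> J
      then (1 - \<epsilon> i) * \<mu> i t + \<epsilon> i * (if t = \<theta>t i then 1 else 0)
      else \<mu> i t)"

definition stable :: "('i::finite \<Rightarrow> 'a set) \<Rightarrow> ('i \<Rightarrow> ('i,'a) utility) \<Rightarrow>
     ('i \<Rightarrow> ('i,'a) utility \<Rightarrow> real) \<Rightarrow> (('i \<Rightarrow> ('i,'a) utility) \<Rightarrow> ('i \<Rightarrow> 'a \<Rightarrow> real)) \<Rightarrow> bool" where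
  "stable As \<pi> \<mu> b \<longleftrightarrow> balanced As \<pi> \<mu> b \<and>
     (\<forall>J \<theta>t. J \<noteq> {} \<longrightarrow> (\<forall>j\<in>J. \<theta>t j \<in> Theta As \<and> \<theta>t j \<notin> supp (\<mu> j)) \<longrightarrow>
       (\<exists>e\<in>{0<..<1}. \<forall>\<epsilon>. (\<forall>j\<in>J. 0 < \<epsilon> j \<and> \<epsilon> j < e) \<longrightarrow>
          (\<forall>bt. bt \<in> B1 As (post_entry \<mu> J \<theta>t \<epsilon>) \<longrightarrow>
                (\<forall>\<theta>\<in>supp_prof \<mu>. bt \<theta> = b \<theta>) \<longrightarrow>
             (\<exists>j\<in>J. \<forall>t\<in>supp (\<mu> j).
                 avg_fit As \<pi> (post_entry \<mu> J \<theta>t \<epsilon>) bt j t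
                   > avg_fit As \<pi> (post_entry \<mu> J \<theta>t \<epsilon>) bt j (\<theta>t j))
             \<or> balanced As \<pi> (post_entry \<mu> J \<theta>t \<epsilon>) bt)))"

end

theory Submission
  imports Defs
begin

lemma sum_prod_PiE_UNIV:
  fixes f :: "'i::finite \<Rightarrow> 'b \<Rightarrow> real"
  assumes "\<And>i. finite (B i)"
  shows "(\<Sum>g\<in>PiE UNIV B. \<Prod>i\<in>UNIV. f i (g i)) = (\<Prod>i\<in>UNIV. \<Sum>y\<in>B i. f i y)"
  using prod_sum_PiE[of UNIV B f] assms by simp

lemma mixed_sum1:
  assumes "finite_game As" "mixed_profile As \<sigma>"
  shows "(\<Sum>a\<in>profiles As. \<Prod>j\<in>UNIV. \<sigma> j (a j)) = 1"
proof -
  have "(\<Sum>a\<in>profiles As. \<Prod>j\<in>UNIV. \<sigma> j (a j)) = (\<Prod>j\<in>UNIV. \<Sum>y\<in>As j. \<sigma> j y)"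
    unfolding profiles_def using assms(1) by (intro sum_prod_PiE_UNIV) (auto simp: finite_game_def)
  also have "\<dots> = 1" using assms(2) by (simp add: mixed_profile_def mixed_def)
  finally show ?thesis .
qed

definition cu :: "('i \<Rightarrow> 'a set) \<Rightarrow> real \<Rightarrow> ('i,'a) utility" where
  "cu As r = (\<lambda>a. if a \<in> profiles As then r else 0)"

lemma exp_pay_cu:
  assumes "finite_game As" "mixed_profile As \<sigma>"
  shows "exp_pay As (cu As r) \<sigma> = r"
proof -
  have "exp_pay As (cu As r) \<sigma> = (\<Sum>a\<in>profiles As. (\<Prod>j\<in>UNIV. \<sigma> j (a j)) * r)"
    unfolding exp_pay_def cu_def by (rule sum.cong) auto
  also have "\<dots> = (\<Sum>a\<in>profiles As. \<Prod>j\<in>UNIV. \<sigma> j (a j)) * r"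
    by (simp add: sum_distrib_right)
  finally show ?thesis using mixed_sum1[OF assms] by simp
qed

lemma cu_Theta: "cu As r \<in> Theta As"
  by (simp add: cu_def Theta_def)

lemma mixed_upd: "mixed_profile As \<sigma> \<Longrightarrow> mixed (As i) \<tau> \<Longrightarrow> mixed_profile As (\<sigma>(i:=\<tau>))"
  by (simp add: mixed_profile_def)

lemma nash_mutant:
  assumes fg: "finite_game As" and n: "nash As \<theta> \<sigma>"
    and h: "\<forall>k. \<theta>' k = \<theta> k \<or> (\<exists>r. \<theta>' k = cu As r)"
  shows "nash As \<theta>' \<sigma>"
  unfolding nash_def
proof (intro conjI allI impI)
  show mp: "mixed_profile As \<sigma>" using n by (simp add: nash_def)
  fix i \<tau> assume m: "mixed (As i) \<tau>"
  show "exp_pay As (\<theta>' i) (\<sigma>(i := \<tau>)) \<le> exp_pay As (\<theta>' i) \<sigma>"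
  proof (cases "\<theta>' i = \<theta> i")
    case True then show ?thesis using n m by (simp add: nash_def)
  next
    case False
    then obtain r where "\<theta>' i = cu As r" using h by blast
    then show ?thesis using exp_pay_cu[OF fg mp] exp_pay_cu[OF fg mixed_upd[OF mp m]] by simp
  qed
qed

lemma supp_post:
  assumes nonneg: "\<forall>k x. 0 \<le> \<mu> k x" and eps: "\<forall>j\<in>J. 0 < \<epsilon> j \<and> \<epsilon> j < 1"
    and new: "\<forall>j\<in>J. c j \<notin> supp (\<mu> j)"
  shows "supp (post_entry \<mu> J c \<epsilon> k) = (if k \<in> J then insert (c k) (supp (\<mu> k)) else supp (\<mu> k))"
proof (cases "k \<in> J")
  case True
  have e: "0 < \<epsilon> k" "\<epsilon> k < 1" and nk: "\<mu> k (c k) = 0" using eps new True by (auto simp: supp_def)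
  show ?thesis using True e nk by (auto simp: supp_def post_entry_def)
next
  case False then show ?thesis by (simp add: supp_def post_entry_def)
qed

lemma nonneg_post:
  assumes nonneg: "\<forall>k x. 0 \<le> \<mu> k x" and eps: "\<forall>j\<in>J. 0 < \<epsilon> j \<and> \<epsilon> j < 1"
  shows "\<forall>k x. 0 \<le> post_entry \<mu> J c \<epsilon> k x"
  using assms by (auto simp: post_entry_def intro!: add_nonneg_nonneg mult_nonneg_nonneg)

lemma avg_reindex:
  assumes "c \<in> supp (\<mu>' i)" "t \<in> supp (\<mu>' i)"
  shows "avg_fit As \<pi> \<mu>' bt i t = (\<Sum>\<theta>\<in>{\<theta>\<in>supp_prof \<mu>'. \<theta> i = c}.
      (\<Prod>j\<in>UNIV-{i}. \<mu>' j (\<theta> j)) * exp_pay As (\<pi> i) (bt (\<theta>(i:=t))))"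
proof -
  have bij: "bij_betw (\<lambda>\<theta>. \<theta>(i:=t)) {\<theta>\<in>supp_prof \<mu>'. \<theta> i = c} {\<theta>\<in>supp_prof \<mu>'. \<theta> i = t}"
    by (rule bij_betwI[where g = "\<lambda>\<theta>. \<theta>(i:=c)"]) (use assms in \<open>auto simp: supp_prof_def PiE_iff\<close>)
  have "avg_fit As \<pi> \<mu>' bt i t = (\<Sum>\<theta>\<in>{\<theta>\<in>supp_prof \<mu>'. \<theta> i = c}.
      (\<Prod>j\<in>UNIV-{i}. \<mu>' j ((\<theta>(i:=t)) j)) * exp_pay As (\<pi> i) (bt (\<theta>(i:=t))))"
    unfolding avg_fit_def by (rule sum.reindex_bij_betw[OF bij, symmetric])
  also have "\<dots> = (\<Sum>\<theta>\<in>{\<theta>\<in>supp_prof \<mu>'. \<theta> i = c}.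
      (\<Prod>j\<in>UNIV-{i}. \<mu>' j (\<theta> j)) * exp_pay As (\<pi> i) (bt (\<theta>(i:=t))))"
    by (intro sum.cong refl arg_cong2[where f="(*)"] prod.cong) auto
  finally show ?thesis .
qed

lemma weight_pos:
  assumes "\<forall>k x. 0 \<le> \<mu>' k x" "\<theta> \<in> supp_prof \<mu>'"
  shows "0 < (\<Prod>j\<in>UNIV-{i}. \<mu>' j (\<theta> j))"
  using assms by (intro prod_pos) (force simp: supp_prof_def PiE_iff supp_def order_le_less)

lemma finite_supp_prof:
  fixes \<mu>' :: "'i::finite \<Rightarrow> ('i,'a) utility \<Rightarrow> real"
  assumes "\<forall>k. finite (supp (\<mu>' k))"
  shows "finite (supp_prof \<mu>')"
  using assms unfolding supp_prof_def by (intro finite_PiE) auto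

lemma avg_cmp:
  assumes nonneg: "\<forall>k x. 0 \<le> \<mu>' k x" and fin: "\<forall>k. finite (supp (\<mu>' k))"
    and c: "c \<in> supp (\<mu>' i)" and t: "t \<in> supp (\<mu>' i)"
    and le: "\<forall>\<theta>\<in>{\<theta>\<in>supp_prof \<mu>'. \<theta> i = c}. exp_pay As (\<pi> i) (bt (\<theta>(i:=t))) \<le> exp_pay As (\<pi> i) (bt \<theta>)"
  shows "avg_fit As \<pi> \<mu>' bt i t \<le> avg_fit As \<pi> \<mu>' bt i c"
    and "avg_fit As \<pi> \<mu>' bt i c \<le> avg_fit As \<pi> \<mu>' bt i t \<Longrightarrow>
         \<forall>\<theta>\<in>{\<theta>\<in>supp_prof \<mu>'. \<theta> i = c}. exp_pay As (\<pi> i) (bt (\<theta>(i:=t))) = exp_pay As (\<pi> i) (bt \<theta>)"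
proof -
  let ?S = "{\<theta>\<in>supp_prof \<mu>'. \<theta> i = c}"
  let ?w = "\<lambda>\<theta>. (\<Prod>j\<in>UNIV-{i}. \<mu>' j (\<theta> j))"
  have finS: "finite ?S" using finite_supp_prof[OF fin] by simp
  have At: "avg_fit As \<pi> \<mu>' bt i t = (\<Sum>\<theta>\<in>?S. ?w \<theta> * exp_pay As (\<pi> i) (bt (\<theta>(i:=t))))"
    by (rule avg_reindex[of c \<mu>' i t, OF c t])
  have Ac: "avg_fit As \<pi> \<mu>' bt i c = (\<Sum>\<theta>\<in>?S. ?w \<theta> * exp_pay As (\<pi> i) (bt \<theta>))"
    unfolding avg_fit_def by simp
  have d: "avg_fit As \<pi> \<mu>' bt i c - avg_fit As \<pi> \<mu>' bt i t =
     (\<Sum>\<theta>\<in>?S. ?w \<theta> * (exp_pay As (\<pi> i) (bt \<theta>) - exp_pay As (\<pi> i) (bt (\<theta>(i:=t)))))"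
    unfolding At Ac by (simp add: sum_subtractf right_diff_distrib)
  have nn: "\<forall>\<theta>\<in>?S. 0 \<le> ?w \<theta> * (exp_pay As (\<pi> i) (bt \<theta>) - exp_pay As (\<pi> i) (bt (\<theta>(i:=t))))"
  proof
    fix \<theta> assume th: "\<theta> \<in> ?S"
    have "?w \<theta> > 0" using weight_pos[OF nonneg] th by auto
    moreover have "exp_pay As (\<pi> i) (bt (\<theta>(i:=t))) \<le> exp_pay As (\<pi> i) (bt \<theta>)" using le th by blast
    ultimately show "0 \<le> ?w \<theta> * (exp_pay As (\<pi> i) (bt \<theta>) - exp_pay As (\<pi> i) (bt (\<theta>(i:=t))))" by simp
  qed
  have sn: "0 \<le> (\<Sum>\<theta>\<in>?S. ?w \<theta> * (exp_pay As (\<pi> i) (bt \<theta>) - exp_pay As (\<pi> i) (bt (\<theta>(i:=t)))))"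
    using nn by (intro sum_nonneg) blast
  show "avg_fit As \<pi> \<mu>' bt i t \<le> avg_fit As \<pi> \<mu>' bt i c"
    using d sn by linarith
  assume "avg_fit As \<pi> \<mu>' bt i c \<le> avg_fit As \<pi> \<mu>' bt i t"
  then have "(\<Sum>\<theta>\<in>?S. ?w \<theta> * (exp_pay As (\<pi> i) (bt \<theta>) - exp_pay As (\<pi> i) (bt (\<theta>(i:=t))))) = 0"
    using d sn by linarith
  then have z: "\<forall>\<theta>\<in>?S. ?w \<theta> * (exp_pay As (\<pi> i) (bt \<theta>) - exp_pay As (\<pi> i) (bt (\<theta>(i:=t)))) = 0"
    by (subst (asm) sum_nonneg_eq_0_iff[OF finS]) (use nn in auto)
  show "\<forall>\<theta>\<in>?S. exp_pay As (\<pi> i) (bt (\<theta>(i:=t))) = exp_pay As (\<pi> i) (bt \<theta>)"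
  proof
    fix \<theta> assume th: "\<theta> \<in> ?S"
    have "?w \<theta> > 0" using weight_pos[OF nonneg] th by auto
    moreover have "?w \<theta> * (exp_pay As (\<pi> i) (bt \<theta>) - exp_pay As (\<pi> i) (bt (\<theta>(i:=t)))) = 0"
      using z th by blast
    ultimately show "exp_pay As (\<pi> i) (bt (\<theta>(i:=t))) = exp_pay As (\<pi> i) (bt \<theta>)" by (metis less_irrefl mult_eq_0_iff eq_iff_diff_eq_0)
  qed
qed

lemma avg_eq:
  assumes c: "c \<in> supp (\<mu>' i)" and t: "t \<in> supp (\<mu>' i)"
    and eq: "\<forall>\<theta>\<in>{\<theta>\<in>supp_prof \<mu>'. \<theta> i = c}. exp_pay As (\<pi> i) (bt (\<theta>(i:=t))) = exp_pay As (\<pi> i) (bt \<theta>)"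
  shows "avg_fit As \<pi> \<mu>' bt i t = avg_fit As \<pi> \<mu>' bt i c"
  unfolding avg_reindex[of c \<mu>' i t, OF c t] unfolding avg_fit_def using eq by (intro sum.cong) auto

lemma mem_supp_prof: "\<theta> \<in> supp_prof \<mu> \<longleftrightarrow> (\<forall>k. \<theta> k \<in> supp (\<mu> k))"
  by (simp add: supp_prof_def PiE_iff)

lemma exists_max:
  fixes g :: "'b \<Rightarrow> real"
  assumes "finite A" "A \<noteq> {}"
  shows "\<exists>x\<in>A. \<forall>y\<in>A. g y \<le> g x"
proof -
  have "Max (g ` A) \<in> g ` A" using assms by (intro Max_in) auto
  then obtain x where x: "x \<in> A" "g x = Max (g ` A)" by (metis imageE)
  then show ?thesis using assms by (intro bexI[OF _ x(1)]) auto
qed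

lemma fresh_cu:
  assumes fg: "finite_game As" and fin: "finite (supp m)"
  shows "\<exists>r. cu As r \<notin> supp m"
proof -
  have "profiles As \<noteq> {}" using fg by (auto simp: profiles_def finite_game_def PiE_eq_empty_iff)
  then obtain a0 where a0: "a0 \<in> profiles As" by blast
  obtain r where r: "r \<notin> (\<lambda>u. u a0) ` supp m"
    using ex_new_if_finite[OF infinite_UNIV_char_0] fin by blast
  have "cu As r \<notin> supp m"
  proof
    assume "cu As r \<in> supp m"
    then have "cu As r a0 \<in> (\<lambda>u. u a0) ` supp m" by blast
    then show False using r a0 by (simp add: cu_def)
  qed
  then show ?thesis by blast
qed

lemma pd_facts:
  assumes "pop_distr As \<mu>"
  shows "\<forall>k x. 0 \<le> \<mu> k x" "\<forall>k. finite (supp (\<mu> k))" "\<forall>k. supp (\<mu> k) \<noteq> {}"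
proof -
  show "\<forall>k x. 0 \<le> \<mu> k x" "\<forall>k. finite (supp (\<mu> k))" using assms by (auto simp: pop_distr_def distr_def)
  show "\<forall>k. supp (\<mu> k) \<noteq> {}"
  proof
    fix k
    have "sum (\<mu> k) (supp (\<mu> k)) = 1" using assms by (auto simp: pop_distr_def distr_def)
    then show "supp (\<mu> k) \<noteq> {}" by auto
  qed
qed

lemma stable_use:
  assumes st: "stable As \<pi> \<mu> b" and J: "J \<noteq> {}"
    and new: "\<forall>j\<in>J. c j \<in> Theta As \<and> c j \<notin> supp (\<mu> j)"
    and B: "\<And>\<epsilon>. \<forall>j\<in>J. 0 < \<epsilon> j \<and> \<epsilon> j < 1 \<Longrightarrow> bt \<in> B1 As (post_entry \<mu> J c \<epsilon>)"
    and agree: "\<forall>\<theta>\<in>supp_prof \<mu>. bt \<theta> = b \<theta>"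
  shows "\<exists>\<epsilon>. (\<forall>j\<in>J. 0 < \<epsilon> j \<and> \<epsilon> j < 1) \<and>
     ((\<exists>j\<in>J. \<forall>t\<in>supp (\<mu> j).
                 avg_fit As \<pi> (post_entry \<mu> J c \<epsilon>) bt j t
                   > avg_fit As \<pi> (post_entry \<mu> J c \<epsilon>) bt j (c j))
      \<or> balanced As \<pi> (post_entry \<mu> J c \<epsilon>) bt)"
proof -
  obtain e where e: "e \<in> {0<..<1}" and H: "\<forall>\<epsilon>. (\<forall>j\<in>J. 0 < \<epsilon> j \<and> \<epsilon> j < e) \<longrightarrow>
          (\<forall>bt. bt \<in> B1 As (post_entry \<mu> J c \<epsilon>) \<longrightarrow>
                (\<forall>\<theta>\<in>supp_prof \<mu>. bt \<theta> = b \<theta>) \<longrightarrow>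
             (\<exists>j\<in>J. \<forall>t\<in>supp (\<mu> j).
                 avg_fit As \<pi> (post_entry \<mu> J c \<epsilon>) bt j t
                   > avg_fit As \<pi> (post_entry \<mu> J c \<epsilon>) bt j (c j))
             \<or> balanced As \<pi> (post_entry \<mu> J c \<epsilon>) bt)"
    using conjunct2[OF st[unfolded stable_def], rule_format, OF J new[rule_format]] by blast
  define \<epsilon> where "\<epsilon> = (\<lambda>j. if j \<in> J then e / 2 else e / 2)"
  have ep: "\<forall>j\<in>J. 0 < \<epsilon> j \<and> \<epsilon> j < e" "\<forall>j\<in>J. 0 < \<epsilon> j \<and> \<epsilon> j < 1"
    using e by (auto simp: \<epsilon>_def)
  have "(\<exists>j\<in>J. \<forall>t\<in>supp (\<mu> j).
                 avg_fit As \<pi> (post_entry \<mu> J c \<epsilon>) bt j t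
                   > avg_fit As \<pi> (post_entry \<mu> J c \<epsilon>) bt j (c j))
      \<or> balanced As \<pi> (post_entry \<mu> J c \<epsilon>) bt"
    using H[rule_format, OF ep(1)[rule_format] B[OF ep(2)] agree[rule_format]] .
  then show ?thesis using ep(2) by blast
qed

lemma step1:
  fixes As :: "'i::finite \<Rightarrow> 'a set"
  assumes fg: "finite_game As" and pd: "pop_distr As \<mu>" and bB: "b \<in> B1 As \<mu>"
    and st: "stable As \<pi> \<mu> b"
    and th1: "\<theta>1 \<in> supp_prof \<mu>" and s: "s \<in> supp (\<mu> i)"
  shows "exp_pay As (\<pi> i) (b (\<theta>1(i:=s))) \<le> exp_pay As (\<pi> i) (b \<theta>1)"
proof -
  define F where "F = (\<lambda>\<theta>. exp_pay As (\<pi> i) (b \<theta>))"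
  note nn = pd_facts(1)[OF pd] and fin = pd_facts(2)[OF pd] and ne = pd_facts(3)[OF pd]
  obtain r where r: "cu As r \<notin> supp (\<mu> i)" using fresh_cu[OF fg] fin by blast
  define c where "c = cu As r"
  define cJ where "cJ = (\<lambda>k::'i. c)"
  have mex: "\<And>\<theta>. \<exists>x. x \<in> supp (\<mu> i) \<and> (\<forall>y\<in>supp (\<mu> i). F (\<theta>(i:=y)) \<le> F (\<theta>(i:=x)))"
  proof -
    fix \<theta>
    obtain x where "x \<in> supp (\<mu> i)" "\<forall>y\<in>supp (\<mu> i). F (\<theta>(i:=y)) \<le> F (\<theta>(i:=x))"
      using exists_max[where g="\<lambda>x. F(\<theta>(i:=x))" and A="supp (\<mu> i)"] fin ne by auto
    then show "\<exists>x. x \<in> supp (\<mu> i) \<and> (\<forall>y\<in>supp (\<mu> i). F (\<theta>(i:=y)) \<le> F (\<theta>(i:=x)))" by blast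
  qed
  define m where "m = (\<lambda>\<theta>. SOME x. x \<in> supp (\<mu> i) \<and> (\<forall>y\<in>supp (\<mu> i). F (\<theta>(i:=y)) \<le> F (\<theta>(i:=x))))"
  have mp: "\<And>\<theta>. m \<theta> \<in> supp (\<mu> i) \<and> (\<forall>y\<in>supp (\<mu> i). F (\<theta>(i:=y)) \<le> F (\<theta>(i:=m \<theta>)))"
    unfolding m_def by (rule someI_ex[OF mex])
  define bt where "bt = (\<lambda>\<theta>. if \<theta> i = c then b (\<theta>(i := m \<theta>)) else b \<theta>)"
  have new: "\<forall>j\<in>{i}. cJ j \<in> Theta As \<and> cJ j \<notin> supp (\<mu> j)" using r cu_Theta by (simp add: cJ_def c_def)
  have new2: "\<forall>j\<in>{i}. cJ j \<notin> supp (\<mu> j)" using new by blast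
  have B: "bt \<in> B1 As (post_entry \<mu> {i} cJ \<epsilon>)" if ep: "\<forall>j\<in>{i}. 0 < \<epsilon> j \<and> \<epsilon> j < 1" for \<epsilon>
  proof -
    have sp: "\<And>k. supp (post_entry \<mu> {i} cJ \<epsilon> k) = (if k = i then insert c (supp (\<mu> k)) else supp (\<mu> k))"
      using supp_post[OF nn ep new2] by (simp add: cJ_def)
    show ?thesis unfolding B1_def
    proof (rule CollectI, rule ballI)
      fix \<theta> assume "\<theta> \<in> supp_prof (post_entry \<mu> {i} cJ \<epsilon>)"
      then have th: "\<forall>k. \<theta> k \<in> (if k = i then insert c (supp (\<mu> k)) else supp (\<mu> k))"
        by (simp add: mem_supp_prof sp)
      show "nash As \<theta> (bt \<theta>)"
      proof (cases "\<theta> i = c")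
        case True
        have "\<theta>(i := m \<theta>) \<in> supp_prof \<mu>" unfolding mem_supp_prof
        proof
          fix k show "(\<theta>(i := m \<theta>)) k \<in> supp (\<mu> k)" using th[rule_format, of k] mp[of \<theta>] by auto
        qed
        then have "nash As (\<theta>(i := m \<theta>)) (b (\<theta>(i := m \<theta>)))" using bB by (simp add: B1_def)
        moreover have "\<forall>k. \<theta> k = (\<theta>(i := m \<theta>)) k \<or> (\<exists>r. \<theta> k = cu As r)" using True c_def by auto
        ultimately show ?thesis using True nash_mutant[OF fg] by (simp add: bt_def)
      next
        case False
        have "\<theta> \<in> supp_prof \<mu>" unfolding mem_supp_prof
        proof
          fix k show "\<theta> k \<in> supp (\<mu> k)" using th[rule_format, of k] False by (auto split: if_splits)
        qed
        then show ?thesis using False bB by (simp add: bt_def B1_def)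
      qed
    qed
  qed
  have agree: "\<forall>\<theta>\<in>supp_prof \<mu>. bt \<theta> = b \<theta>"
  proof
    fix \<theta> assume "\<theta> \<in> supp_prof \<mu>"
    then have "\<theta> i \<in> supp (\<mu> i)" by (simp add: mem_supp_prof)
    then have "\<theta> i \<noteq> c" using r c_def by auto
    then show "bt \<theta> = b \<theta>" by (simp add: bt_def)
  qed
  obtain \<epsilon> where ep: "\<forall>j\<in>{i}. 0 < \<epsilon> j \<and> \<epsilon> j < 1" and alt: "(\<exists>j\<in>{i}. \<forall>t\<in>supp (\<mu> j).
     avg_fit As \<pi> (post_entry \<mu> {i} cJ \<epsilon>) bt j t > avg_fit As \<pi> (post_entry \<mu> {i} cJ \<epsilon>) bt j (cJ j))
     \<or> balanced As \<pi> (post_entry \<mu> {i} cJ \<epsilon>) bt"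
    using stable_use[OF st insert_not_empty new B agree] by blast
  define \<mu>' where "\<mu>' = post_entry \<mu> {i} cJ \<epsilon>"
  have sp: "\<And>k. supp (\<mu>' k) = (if k = i then insert c (supp (\<mu> k)) else supp (\<mu> k))"
    using supp_post[OF nn ep new2] by (simp add: cJ_def \<mu>'_def)
  have nn': "\<forall>k x. 0 \<le> \<mu>' k x" using nonneg_post[OF nn ep] by (simp add: \<mu>'_def)
  have fin': "\<forall>k. finite (supp (\<mu>' k))" using sp fin by simp
  define t where "t = \<theta>1 i"
  have t: "t \<in> supp (\<mu> i)" using th1 by (simp add: mem_supp_prof t_def)
  have tc: "t \<noteq> c" using t r c_def by auto
  have c': "c \<in> supp (\<mu>' i)" and t': "t \<in> supp (\<mu>' i)" using sp t by auto
  have le: "\<forall>\<theta>\<in>{\<theta>\<in>supp_prof \<mu>'. \<theta> i = c}. exp_pay As (\<pi> i) (bt (\<theta>(i:=t))) \<le> exp_pay As (\<pi> i) (bt \<theta>)"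
    using mp tc t by (auto simp: bt_def F_def)
  have A1: "avg_fit As \<pi> \<mu>' bt i t \<le> avg_fit As \<pi> \<mu>' bt i c" by (rule avg_cmp(1)[where \<mu>'=\<mu>' and i=i and c=c and t=t and bt=bt and As=As and \<pi>=\<pi>, OF nn' fin' c' t' le])
  have bal: "balanced As \<pi> \<mu>' bt"
  proof -
    have "\<not> (\<forall>u\<in>supp (\<mu> i). avg_fit As \<pi> \<mu>' bt i u > avg_fit As \<pi> \<mu>' bt i c)"
      using A1 t by force
    then show ?thesis using alt unfolding \<mu>'_def cJ_def by auto
  qed
  then have "avg_fit As \<pi> \<mu>' bt i c \<le> avg_fit As \<pi> \<mu>' bt i t" using c' t' unfolding balanced_def by (metis order_refl)
  then have eq: "\<forall>\<theta>\<in>{\<theta>\<in>supp_prof \<mu>'. \<theta> i = c}. exp_pay As (\<pi> i) (bt (\<theta>(i:=t))) = exp_pay As (\<pi> i) (bt \<theta>)"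
    by (rule avg_cmp(2)[where \<mu>'=\<mu>' and i=i and c=c and t=t and bt=bt and As=As and \<pi>=\<pi>, OF nn' fin' c' t' le])
  have mem: "\<theta>1(i:=c) \<in> supp_prof \<mu>'" using th1 sp by (auto simp: mem_supp_prof)
  have "F ((\<theta>1(i:=c))(i:=t)) = F ((\<theta>1(i:=c))(i := m (\<theta>1(i:=c))))"
  proof -
    have memc: "\<theta>1(i:=c) \<in> {\<theta>\<in>supp_prof \<mu>'. \<theta> i = c}" using mem by simp
    show ?thesis using eq[rule_format, OF memc] tc by (simp add: bt_def F_def)
  qed
  hence "F \<theta>1 = F (\<theta>1(i := m (\<theta>1(i:=c))))" by (simp add: t_def)
  moreover have "F (\<theta>1(i:=s)) \<le> F (\<theta>1(i := m (\<theta>1(i:=c))))" using mp[of "\<theta>1(i:=c)"] s by simp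
  ultimately show ?thesis by (simp add: F_def)
qed

lemma step2:
  fixes As :: "'i::finite \<Rightarrow> 'a set"
  assumes fg: "finite_game As" and pd: "pop_distr As \<mu>" and bB: "b \<in> B1 As \<mu>"
    and st: "stable As \<pi> \<mu> b" and ij: "i \<noteq> j"
    and th1: "\<theta>1 \<in> supp_prof \<mu>" and s: "s \<in> supp (\<mu> j)"
  shows "exp_pay As (\<pi> i) (b (\<theta>1(j:=s))) \<le> exp_pay As (\<pi> i) (b \<theta>1)"
proof -
  define F where "F = (\<lambda>\<theta>. exp_pay As (\<pi> i) (b \<theta>))"
  define Fj where "Fj = (\<lambda>\<theta>. exp_pay As (\<pi> j) (b \<theta>))"
  note nn = pd_facts(1)[OF pd] and fin = pd_facts(2)[OF pd] and ne = pd_facts(3)[OF pd]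
  obtain ri where ri: "cu As ri \<notin> supp (\<mu> i)" using fresh_cu[OF fg] fin by blast
  obtain rj where rj: "cu As rj \<notin> supp (\<mu> j)" using fresh_cu[OF fg] fin by blast
  define ci where "ci = cu As ri"
  define cj where "cj = cu As rj"
  define cJ where "cJ = (\<lambda>k::'i. if k = i then ci else cj)"
  define t where "t = \<theta>1 i"
  define sj where "sj = \<theta>1 j"
  have t: "t \<in> supp (\<mu> i)" using th1 by (simp add: mem_supp_prof t_def)
  have sj: "sj \<in> supp (\<mu> j)" using th1 by (simp add: mem_supp_prof sj_def)
  have tc: "t \<noteq> ci" using t ri ci_def by auto
  have sc: "sj \<noteq> cj" using sj rj cj_def by auto
  have mex: "\<And>\<theta>. \<exists>x. x \<in> supp (\<mu> j) \<and> (\<forall>y\<in>supp (\<mu> j). F (\<theta>(i:=t, j:=y)) \<le> F (\<theta>(i:=t, j:=x)))"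
  proof -
    fix \<theta>
    obtain x where "x \<in> supp (\<mu> j)" "\<forall>y\<in>supp (\<mu> j). F (\<theta>(i:=t, j:=y)) \<le> F (\<theta>(i:=t, j:=x))"
      using exists_max[where g="\<lambda>x. F(\<theta>(i:=t, j:=x))" and A="supp (\<mu> j)"] fin ne by auto
    then show "\<exists>x. x \<in> supp (\<mu> j) \<and> (\<forall>y\<in>supp (\<mu> j). F (\<theta>(i:=t, j:=y)) \<le> F (\<theta>(i:=t, j:=x)))" by blast
  qed
  define m where "m = (\<lambda>\<theta>. SOME x. x \<in> supp (\<mu> j) \<and> (\<forall>y\<in>supp (\<mu> j). F (\<theta>(i:=t, j:=y)) \<le> F (\<theta>(i:=t, j:=x))))"
  have mp: "\<And>\<theta>. m \<theta> \<in> supp (\<mu> j) \<and> (\<forall>y\<in>supp (\<mu> j). F (\<theta>(i:=t, j:=y)) \<le> F (\<theta>(i:=t, j:=m \<theta>)))"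
    unfolding m_def by (rule someI_ex[OF mex])
  define R where "R = (\<lambda>\<theta>. if \<theta> i = ci \<and> \<theta> j = cj then \<theta>(i:=t, j:=m \<theta>)
      else if \<theta> i = ci then \<theta>(i:=t) else if \<theta> j = cj then \<theta>(j:=sj) else \<theta>)"
  define bt where "bt = (\<lambda>\<theta>. b (R \<theta>))"
  have new: "\<forall>k\<in>{i,j}. cJ k \<in> Theta As \<and> cJ k \<notin> supp (\<mu> k)"
    using ri rj cu_Theta ij by (auto simp: cJ_def ci_def cj_def)
  have new2: "\<forall>k\<in>{i,j}. cJ k \<notin> supp (\<mu> k)" using new by blast
  have Rfacts: "R \<theta> \<in> supp_prof \<mu> \<and> (\<forall>k. \<theta> k = R \<theta> k \<or> (\<exists>r. \<theta> k = cu As r))"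
    if th: "\<forall>k. \<theta> k \<in> (if k = i then insert ci (supp (\<mu> k)) else if k = j then insert cj (supp (\<mu> k)) else supp (\<mu> k))"
    for \<theta>
  proof
    show "R \<theta> \<in> supp_prof \<mu>" unfolding mem_supp_prof
    proof
      fix k show "R \<theta> k \<in> supp (\<mu> k)"
        using th[rule_format, of k] mp[of \<theta>] t sj ij unfolding R_def by (auto split: if_splits)
    qed
    show "\<forall>k. \<theta> k = R \<theta> k \<or> (\<exists>r. \<theta> k = cu As r)"
      using ij unfolding R_def ci_def cj_def by auto
  qed
  have B: "bt \<in> B1 As (post_entry \<mu> {i,j} cJ \<epsilon>)" if ep: "\<forall>k\<in>{i,j}. 0 < \<epsilon> k \<and> \<epsilon> k < 1" for \<epsilon>
  proof -
    have sp: "\<And>k. supp (post_entry \<mu> {i,j} cJ \<epsilon> k) = (if k = i then insert ci (supp (\<mu> k)) else if k = j then insert cj (supp (\<mu> k)) else supp (\<mu> k))"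
      using supp_post[OF nn ep new2] ij by (simp add: cJ_def)
    show ?thesis unfolding B1_def
    proof (rule CollectI, rule ballI)
      fix \<theta> assume "\<theta> \<in> supp_prof (post_entry \<mu> {i,j} cJ \<epsilon>)"
      then have th: "\<forall>k. \<theta> k \<in> (if k = i then insert ci (supp (\<mu> k)) else if k = j then insert cj (supp (\<mu> k)) else supp (\<mu> k))"
        by (simp add: mem_supp_prof sp)
      have "nash As (R \<theta>) (b (R \<theta>))" using Rfacts[OF th] bB by (simp add: B1_def)
      then show "nash As \<theta> (bt \<theta>)" using Rfacts[OF th] nash_mutant[OF fg] by (simp add: bt_def)
    qed
  qed
  have agree: "\<forall>\<theta>\<in>supp_prof \<mu>. bt \<theta> = b \<theta>"
  proof
    fix \<theta> assume "\<theta> \<in> supp_prof \<mu>"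
    then have "\<theta> i \<in> supp (\<mu> i)" "\<theta> j \<in> supp (\<mu> j)" by (simp_all add: mem_supp_prof)
    then have "\<theta> i \<noteq> ci" "\<theta> j \<noteq> cj" using ri rj ci_def cj_def by auto
    then show "bt \<theta> = b \<theta>" by (simp add: bt_def R_def)
  qed
  obtain \<epsilon> where ep: "\<forall>k\<in>{i,j}. 0 < \<epsilon> k \<and> \<epsilon> k < 1" and alt: "(\<exists>k\<in>{i,j}. \<forall>u\<in>supp (\<mu> k).
     avg_fit As \<pi> (post_entry \<mu> {i,j} cJ \<epsilon>) bt k u > avg_fit As \<pi> (post_entry \<mu> {i,j} cJ \<epsilon>) bt k (cJ k))
     \<or> balanced As \<pi> (post_entry \<mu> {i,j} cJ \<epsilon>) bt"
    using stable_use[OF st insert_not_empty new B agree] by blast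
  define \<mu>' where "\<mu>' = post_entry \<mu> {i,j} cJ \<epsilon>"
  have sp: "\<And>k. supp (\<mu>' k) = (if k = i then insert ci (supp (\<mu> k)) else if k = j then insert cj (supp (\<mu> k)) else supp (\<mu> k))"
    using supp_post[OF nn ep new2] ij by (simp add: cJ_def \<mu>'_def)
  have nn': "\<forall>k x. 0 \<le> \<mu>' k x" using nonneg_post[OF nn ep] by (simp add: \<mu>'_def)
  have fin': "\<forall>k. finite (supp (\<mu>' k))" using sp fin by simp
  have ci': "ci \<in> supp (\<mu>' i)" and t': "t \<in> supp (\<mu>' i)" using sp t by auto
  have cj': "cj \<in> supp (\<mu>' j)" and sj': "sj \<in> supp (\<mu>' j)" using sp sj ij by auto
  have le: "\<forall>\<theta>\<in>{\<theta>\<in>supp_prof \<mu>'. \<theta> i = ci}. exp_pay As (\<pi> i) (bt (\<theta>(i:=t))) \<le> exp_pay As (\<pi> i) (bt \<theta>)"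
  proof
    fix \<theta> assume "\<theta> \<in> {\<theta>\<in>supp_prof \<mu>'. \<theta> i = ci}"
    then have ti: "\<theta> i = ci" by simp
    show "exp_pay As (\<pi> i) (bt (\<theta>(i:=t))) \<le> exp_pay As (\<pi> i) (bt \<theta>)"
    proof (cases "\<theta> j = cj")
      case True
      have "bt \<theta> = b (\<theta>(i:=t, j:=m \<theta>))" using ti True by (simp add: bt_def R_def)
      moreover have "bt (\<theta>(i:=t)) = b (\<theta>(i:=t, j:=sj))" using ti True tc ij by (simp add: bt_def R_def)
      ultimately show ?thesis using mp[of \<theta>] sj by (simp add: F_def)
    next
      case False
      then show ?thesis using ti tc ij by (simp add: bt_def R_def)
    qed
  qed
  have eqj: "\<forall>\<theta>\<in>{\<theta>\<in>supp_prof \<mu>'. \<theta> j = cj}. exp_pay As (\<pi> j) (bt (\<theta>(j:=sj))) = exp_pay As (\<pi> j) (bt \<theta>)"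
  proof
    fix \<theta> assume th: "\<theta> \<in> {\<theta>\<in>supp_prof \<mu>'. \<theta> j = cj}"
    then have tj: "\<theta> j = cj" by simp
    show "exp_pay As (\<pi> j) (bt (\<theta>(j:=sj))) = exp_pay As (\<pi> j) (bt \<theta>)"
    proof (cases "\<theta> i = ci")
      case True
      define \<theta>v where "\<theta>v = \<theta>(i:=t, j:=sj)"
      have vm: "\<theta>v \<in> supp_prof \<mu>" unfolding mem_supp_prof
      proof
        fix k show "\<theta>v k \<in> supp (\<mu> k)"
          using th t sj unfolding \<theta>v_def by (auto simp: mem_supp_prof sp split: if_splits)
      qed
      have e1: "bt \<theta> = b (\<theta>v(j:=m \<theta>))" using tj True by (simp add: bt_def R_def \<theta>v_def)
      have e2: "bt (\<theta>(j:=sj)) = b \<theta>v" using tj True sc ij by (simp add: bt_def R_def \<theta>v_def fun_upd_twist)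
      have "Fj (\<theta>v(j:=m \<theta>)) \<le> Fj \<theta>v" unfolding Fj_def by (rule step1[OF fg pd bB st vm mp[THEN conjunct1]])
      moreover have "Fj (\<theta>v(j:=m \<theta>, j:=\<theta>v j)) \<le> Fj (\<theta>v(j:=m \<theta>))" unfolding Fj_def
        by (rule step1[OF fg pd bB st]) (use vm mp[of \<theta>] in \<open>auto simp: mem_supp_prof\<close>)
      ultimately show ?thesis using e1 e2 by (simp add: Fj_def)
    next
      case False
      then show ?thesis using tj sc ij by (simp add: bt_def R_def)
    qed
  qed
  have A1: "avg_fit As \<pi> \<mu>' bt i t \<le> avg_fit As \<pi> \<mu>' bt i ci"
    by (rule avg_cmp(1)[where \<mu>'=\<mu>' and i=i and c=ci and t=t and bt=bt and As=As and \<pi>=\<pi>, OF nn' fin' ci' t' le])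
  have A2: "avg_fit As \<pi> \<mu>' bt j sj = avg_fit As \<pi> \<mu>' bt j cj"
    by (rule avg_eq[where \<mu>'=\<mu>' and i=j and c=cj and t=sj and bt=bt and As=As and \<pi>=\<pi>, OF cj' sj' eqj])
  have bal: "balanced As \<pi> \<mu>' bt"
  proof -
    have n1: "\<not> (\<forall>u\<in>supp (\<mu> i). avg_fit As \<pi> \<mu>' bt i u > avg_fit As \<pi> \<mu>' bt i ci)"
    proof
      assume "\<forall>u\<in>supp (\<mu> i). avg_fit As \<pi> \<mu>' bt i u > avg_fit As \<pi> \<mu>' bt i ci"
      then have "avg_fit As \<pi> \<mu>' bt i t > avg_fit As \<pi> \<mu>' bt i ci" using t by blast
      then show False using A1 by linarith
    qed
    have n2: "\<not> (\<forall>u\<in>supp (\<mu> j). avg_fit As \<pi> \<mu>' bt j u > avg_fit As \<pi> \<mu>' bt j cj)"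
    proof
      assume "\<forall>u\<in>supp (\<mu> j). avg_fit As \<pi> \<mu>' bt j u > avg_fit As \<pi> \<mu>' bt j cj"
      then have "avg_fit As \<pi> \<mu>' bt j sj > avg_fit As \<pi> \<mu>' bt j cj" using sj by blast
      then show False using A2 by linarith
    qed
    have ci2: "cJ i = ci" and cj2: "cJ j = cj" using ij by (simp_all add: cJ_def)
    have "\<not> (\<exists>k\<in>{i,j}. \<forall>u\<in>supp (\<mu> k). avg_fit As \<pi> \<mu>' bt k u > avg_fit As \<pi> \<mu>' bt k (cJ k))"
    proof
      assume "\<exists>k\<in>{i,j}. \<forall>u\<in>supp (\<mu> k). avg_fit As \<pi> \<mu>' bt k u > avg_fit As \<pi> \<mu>' bt k (cJ k)"
      then obtain k where k: "k = i \<or> k = j" and h: "\<forall>u\<in>supp (\<mu> k). avg_fit As \<pi> \<mu>' bt k u > avg_fit As \<pi> \<mu>' bt k (cJ k)" by blast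
      from k show False
      proof
        assume "k = i" then show False using h n1 ci2 by simp
      next
        assume "k = j" then show False using h n2 cj2 by simp
      qed
    qed
    then show ?thesis using alt unfolding \<mu>'_def by blast
  qed
  then have "avg_fit As \<pi> \<mu>' bt i ci \<le> avg_fit As \<pi> \<mu>' bt i t" using ci' t' unfolding balanced_def by (metis order_refl)
  then have eq: "\<forall>\<theta>\<in>{\<theta>\<in>supp_prof \<mu>'. \<theta> i = ci}. exp_pay As (\<pi> i) (bt (\<theta>(i:=t))) = exp_pay As (\<pi> i) (bt \<theta>)"
    by (rule avg_cmp(2)[where \<mu>'=\<mu>' and i=i and c=ci and t=t and bt=bt and As=As and \<pi>=\<pi>, OF nn' fin' ci' t' le])
  define \<theta> where "\<theta> = \<theta>1(i:=ci, j:=cj)"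
  have mem: "\<theta> \<in> supp_prof \<mu>'" using th1 sp ij unfolding \<theta>_def by (auto simp: mem_supp_prof)
  have thi: "\<theta> i = ci" "\<theta> j = cj" using ij by (simp_all add: \<theta>_def)
  have upd: "\<And>x. \<theta>(i:=t, j:=x) = \<theta>1(j:=x)" by (rule ext) (use ij in \<open>auto simp: \<theta>_def t_def\<close>)
  have upd2: "\<theta>(i:=t) = \<theta>1(j:=cj)" by (rule ext) (use ij in \<open>auto simp: \<theta>_def t_def\<close>)
  have r1: "bt \<theta> = b (\<theta>1(j:=m \<theta>))" using thi upd by (simp add: bt_def R_def)
  have r2: "bt (\<theta>(i:=t)) = b \<theta>1" using thi upd2 ij sc tc by (simp add: bt_def R_def sj_def t_def)
  have "F \<theta>1 = F (\<theta>1(j:=m \<theta>))"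
  proof -
    have memc: "\<theta> \<in> {\<theta>\<in>supp_prof \<mu>'. \<theta> i = ci}" using mem thi by simp
    show ?thesis using eq[rule_format, OF memc] r1 r2 by (simp add: F_def)
  qed
  moreover have "F (\<theta>1(j:=s)) \<le> F (\<theta>1(j := m \<theta>))" using mp[of \<theta>] s upd by simp
  ultimately show ?thesis by (simp add: F_def)
qed

lemma coord_const_aux:
  fixes G :: "('i::finite \<Rightarrow> 'b) \<Rightarrow> real"
  assumes inv: "\<And>\<theta> k x. \<theta> \<in> PiE UNIV A \<Longrightarrow> x \<in> A k \<Longrightarrow> G (\<theta>(k:=x)) = G \<theta>"
    and fin: "finite D"
  shows "\<forall>\<theta> \<theta>'. \<theta> \<in> PiE UNIV A \<longrightarrow> \<theta>' \<in> PiE UNIV A \<longrightarrow> {k. \<theta> k \<noteq> \<theta>' k} \<subseteq> D \<longrightarrow> G \<theta> = G \<theta>'"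
  using fin
proof (induction D rule: finite_induct)
  case empty
  show ?case
  proof (intro allI impI)
    fix \<theta> \<theta>' :: "'i \<Rightarrow> 'b" assume "{k. \<theta> k \<noteq> \<theta>' k} \<subseteq> {}"
    then have "\<theta> = \<theta>'" by (intro ext) auto
    then show "G \<theta> = G \<theta>'" by simp
  qed
next
  case (insert k D)
  show ?case
  proof (intro allI impI)
    fix \<theta> \<theta>' :: "'i \<Rightarrow> 'b"
    assume th: "\<theta> \<in> PiE UNIV A" and th': "\<theta>' \<in> PiE UNIV A" and sub: "{k'. \<theta> k' \<noteq> \<theta>' k'} \<subseteq> insert k D"
    define \<theta>'' where "\<theta>'' = \<theta>'(k := \<theta> k)"
    have tk: "\<theta> k \<in> A k" using th by (auto simp: PiE_iff)
    have th'': "\<theta>'' \<in> PiE UNIV A" using th' tk by (auto simp: PiE_iff \<theta>''_def)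
    have "{k'. \<theta> k' \<noteq> \<theta>'' k'} \<subseteq> D" using sub by (auto simp: \<theta>''_def)
    then have "G \<theta> = G \<theta>''" using insert.IH th th'' by blast
    also have "G \<theta>'' = G \<theta>'" unfolding \<theta>''_def by (rule inv[OF th' tk])
    finally show "G \<theta> = G \<theta>'" .
  qed
qed

lemma coord_const:
  fixes G :: "('i::finite \<Rightarrow> 'b) \<Rightarrow> real"
  assumes inv: "\<And>\<theta> k x. \<theta> \<in> PiE UNIV A \<Longrightarrow> x \<in> A k \<Longrightarrow> G (\<theta>(k:=x)) = G \<theta>"
    and "\<theta> \<in> PiE UNIV A" "\<theta>' \<in> PiE UNIV A"
  shows "G \<theta> = G \<theta>'"
  using coord_const_aux[OF inv finite_UNIV] assms(2,3) by blast

lemma wsum_all: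
  fixes \<mu> :: "'i::finite \<Rightarrow> ('i,'a) utility \<Rightarrow> real"
  assumes pd: "pop_distr As \<mu>"
  shows "(\<Sum>\<theta>\<in>supp_prof \<mu>. \<Prod>j\<in>UNIV. \<mu> j (\<theta> j)) = 1"
proof -
  have "(\<Sum>\<theta>\<in>supp_prof \<mu>. \<Prod>j\<in>UNIV. \<mu> j (\<theta> j)) = (\<Prod>j\<in>UNIV. \<Sum>y\<in>supp (\<mu> j). \<mu> j y)"
    unfolding supp_prof_def using pd_facts(2)[OF pd] by (intro sum_prod_PiE_UNIV) auto
  also have "\<dots> = 1" using pd by (simp add: pop_distr_def distr_def)
  finally show ?thesis .
qed

lemma wsum_i:
  fixes \<mu> :: "'i::finite \<Rightarrow> ('i,'a) utility \<Rightarrow> real"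
  assumes pd: "pop_distr As \<mu>" and tb: "tb \<in> supp (\<mu> i)"
  shows "(\<Sum>\<theta>\<in>{\<theta>\<in>supp_prof \<mu>. \<theta> i = tb}. \<Prod>j\<in>UNIV-{i}. \<mu> j (\<theta> j)) = 1"
proof -
  define B where "B = (\<lambda>j. if j = i then {tb} else supp (\<mu> j))"
  define f where "f = (\<lambda>j y. if j = i then 1 else \<mu> j y)"
  have set: "{\<theta>\<in>supp_prof \<mu>. \<theta> i = tb} = PiE UNIV B"
  proof (rule set_eqI)
    fix x :: "'i \<Rightarrow> ('i,'a) utility"
    show "x \<in> {\<theta>\<in>supp_prof \<mu>. \<theta> i = tb} \<longleftrightarrow> x \<in> PiE UNIV B"
    proof
      assume "x \<in> {\<theta>\<in>supp_prof \<mu>. \<theta> i = tb}"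
      then show "x \<in> PiE UNIV B" by (auto simp: supp_prof_def PiE_iff B_def)
    next
      assume h: "x \<in> PiE UNIV B"
      have "x i \<in> B i" using h by (auto simp: PiE_iff)
      then have xi: "x i = tb" by (simp add: B_def)
      have "\<forall>k. x k \<in> supp (\<mu> k)"
      proof
        fix k
        have "x k \<in> B k" using h by (auto simp: PiE_iff)
        then show "x k \<in> supp (\<mu> k)" using xi tb by (cases "k = i") (auto simp: B_def)
      qed
      then show "x \<in> {\<theta>\<in>supp_prof \<mu>. \<theta> i = tb}" using xi by (simp add: mem_supp_prof)
    qed
  qed
  have pr: "(\<Prod>j\<in>UNIV-{i}. \<mu> j (\<theta> j)) = (\<Prod>j\<in>UNIV. f j (\<theta> j))" for \<theta>
  proof -
    have "(\<Prod>j\<in>UNIV. f j (\<theta> j)) = f i (\<theta> i) * (\<Prod>j\<in>UNIV-{i}. f j (\<theta> j))"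
      by (rule prod.remove) auto
    also have "\<dots> = (\<Prod>j\<in>UNIV-{i}. \<mu> j (\<theta> j))" by (simp add: f_def)
    finally show ?thesis by simp
  qed
  have "(\<Sum>\<theta>\<in>{\<theta>\<in>supp_prof \<mu>. \<theta> i = tb}. \<Prod>j\<in>UNIV-{i}. \<mu> j (\<theta> j)) = (\<Sum>\<theta>\<in>PiE UNIV B. \<Prod>j\<in>UNIV. f j (\<theta> j))"
    unfolding set pr ..
  also have "\<dots> = (\<Prod>j\<in>UNIV. \<Sum>y\<in>B j. f j y)"
    using pd_facts(2)[OF pd] by (intro sum_prod_PiE_UNIV) (auto simp: B_def)
  also have "\<dots> = 1"
  proof -
    have "\<And>j. (\<Sum>y\<in>B j. f j y) = 1" using pd by (auto simp: B_def f_def pop_distr_def distr_def)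
    then show ?thesis by simp
  qed
  finally show ?thesis .
qed

lemma coord_inv:
  fixes As :: "'i::finite \<Rightarrow> 'a set"
  assumes fg: "finite_game As" and pd: "pop_distr As \<mu>" and bB: "b \<in> B1 As \<mu>"
    and st: "stable As \<pi> \<mu> b"
    and th: "\<theta> \<in> supp_prof \<mu>" and x: "x \<in> supp (\<mu> k)"
  shows "exp_pay As (\<pi> i) (b (\<theta>(k:=x))) = exp_pay As (\<pi> i) (b \<theta>)"
proof -
  have thx: "\<theta>(k:=x) \<in> supp_prof \<mu>" using th x by (auto simp: mem_supp_prof)
  have tk: "\<theta> k \<in> supp (\<mu> k)" using th by (simp add: mem_supp_prof)
  have bk: "(\<theta>(k:=x))(k := \<theta> k) = \<theta>" by simp
  show ?thesis
  proof (cases "k = i")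
    case True
    have "exp_pay As (\<pi> i) (b (\<theta>(k:=x))) \<le> exp_pay As (\<pi> i) (b \<theta>)"
      using step1[OF fg pd bB st th, of x i] x True by simp
    moreover have "exp_pay As (\<pi> i) (b ((\<theta>(k:=x))(k := \<theta> k))) \<le> exp_pay As (\<pi> i) (b (\<theta>(k:=x)))"
      using step1[OF fg pd bB st thx, of "\<theta> k" i] tk True by simp
    ultimately show ?thesis using bk by simp
  next
    case False
    then have ik: "i \<noteq> k" by simp
    have "exp_pay As (\<pi> i) (b (\<theta>(k:=x))) \<le> exp_pay As (\<pi> i) (b \<theta>)"
      by (rule step2[OF fg pd bB st ik th x])
    moreover have "exp_pay As (\<pi> i) (b ((\<theta>(k:=x))(k := \<theta> k))) \<le> exp_pay As (\<pi> i) (b (\<theta>(k:=x)))"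
      by (rule step2[OF fg pd bB st ik thx tk])
    ultimately show ?thesis using bk by simp
  qed
qed

theorem mainTheorem3:
  fixes As :: "'i::finite \<Rightarrow> 'a set"
    and \<pi> :: "'i \<Rightarrow> ('i,'a) utility"
    and \<mu> :: "'i \<Rightarrow> ('i,'a) utility \<Rightarrow> real"
    and b :: "('i \<Rightarrow> ('i,'a) utility) \<Rightarrow> ('i \<Rightarrow> 'a \<Rightarrow> real)"
  assumes "finite_game As"
    and "pop_distr As \<mu>"
    and "b \<in> B1 As \<mu>"
    and "stable As \<pi> \<mu> b"
  shows "\<forall>i. \<forall>tb\<in>supp (\<mu> i). \<forall>\<theta>\<in>supp_prof \<mu>.
           avg_fit As \<pi> \<mu> b i tb = exp_pay As (\<pi> i) (b \<theta>)
         \<and> exp_pay As (\<pi> i) (b \<theta>) = corr_pay As (\<pi> i) (aggregate \<mu> b)"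
proof (intro allI ballI conjI)
  note fg = assms(1) and pd = assms(2) and bB = assms(3) and st = assms(4)
  fix i tb \<theta> assume tb: "tb \<in> supp (\<mu> i)" and th: "\<theta> \<in> supp_prof \<mu>"
  define c where "c = exp_pay As (\<pi> i) (b \<theta>)"
  have const: "exp_pay As (\<pi> i) (b \<theta>') = c" if th': "\<theta>' \<in> supp_prof \<mu>" for \<theta>'
  proof -
    have "exp_pay As (\<pi> i) (b \<theta>') = exp_pay As (\<pi> i) (b \<theta>)"
    proof (rule coord_const[where A="\<lambda>k. supp (\<mu> k)" and G="\<lambda>\<theta>. exp_pay As (\<pi> i) (b \<theta>)", simplified])
      fix \<theta>1 k x assume "\<theta>1 \<in> PiE UNIV (\<lambda>k. supp (\<mu> k))" "x \<in> supp (\<mu> k)"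
      then show "exp_pay As (\<pi> i) (b (\<theta>1(k:=x))) = exp_pay As (\<pi> i) (b \<theta>1)"
        using coord_inv[OF fg pd bB st] by (simp add: supp_prof_def)
    qed (use th th' in \<open>simp_all add: supp_prof_def\<close>)
    then show ?thesis by (simp add: c_def)
  qed
  have "avg_fit As \<pi> \<mu> b i tb = (\<Sum>\<theta>'\<in>{\<theta>'\<in>supp_prof \<mu>. \<theta>' i = tb}. (\<Prod>j\<in>UNIV-{i}. \<mu> j (\<theta>' j)) * c)"
    unfolding avg_fit_def using const by (intro sum.cong) auto
  also have "\<dots> = (\<Sum>\<theta>'\<in>{\<theta>'\<in>supp_prof \<mu>. \<theta>' i = tb}. (\<Prod>j\<in>UNIV-{i}. \<mu> j (\<theta>' j))) * c"
    by (simp add: sum_distrib_right)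
  also have "\<dots> = c" using wsum_i[OF pd tb] by simp
  finally show "avg_fit As \<pi> \<mu> b i tb = exp_pay As (\<pi> i) (b \<theta>)" by (simp add: c_def)
  define W where "W = (\<lambda>\<theta>'. \<Prod>j\<in>UNIV. \<mu> j (\<theta>' j))"
  define Q where "Q = (\<lambda>\<theta>' (a::'i \<Rightarrow> 'a). \<Prod>j\<in>UNIV. b \<theta>' j (a j))"
  have "corr_pay As (\<pi> i) (aggregate \<mu> b) = (\<Sum>a\<in>profiles As. \<Sum>\<theta>'\<in>supp_prof \<mu>. W \<theta>' * (Q \<theta>' a * \<pi> i a))"
    unfolding corr_pay_def aggregate_def W_def Q_def by (simp add: sum_distrib_right mult.assoc)
  also have "\<dots> = (\<Sum>\<theta>'\<in>supp_prof \<mu>. \<Sum>a\<in>profiles As. W \<theta>' * (Q \<theta>' a * \<pi> i a))"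
    by (rule sum.swap)
  also have "\<dots> = (\<Sum>\<theta>'\<in>supp_prof \<mu>. W \<theta>' * exp_pay As (\<pi> i) (b \<theta>'))"
    unfolding exp_pay_def Q_def by (simp add: sum_distrib_left)
  also have "\<dots> = (\<Sum>\<theta>'\<in>supp_prof \<mu>. W \<theta>' * c)"
    using const by (intro sum.cong) auto
  also have "\<dots> = (\<Sum>\<theta>'\<in>supp_prof \<mu>. W \<theta>') * c" by (simp add: sum_distrib_right)
  also have "\<dots> = c" using wsum_all[OF pd] by (simp add: W_def)
  finally show "exp_pay As (\<pi> i) (b \<theta>) = corr_pay As (\<pi> i) (aggregate \<mu> b)" by (simp add: c_def)
qed

end
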